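(* Let $(R,[\cdot_\lambda\cdot],\alpha,\beta)$ be a BiHom-Lie conformal superalgebra, let $k,l,s,t\ge0$ be integers, and let $f\in\mathrm{Der}_{\alpha^k\beta^l}(R)$ and $g\in\mathrm{Der}_{\alpha^s\beta^t}(R)$ be homogeneous. Define $[f_\lambda g]_\mu(a)=f_\lambda(g_{\mu-\lambda}a)-(-1)^{|f||g|}g_{\mu-\lambda}(f_\lambda a)$ for $a\in R$. Then $[f_\lambda g]\in\mathrm{Der}_{\alpha^{k+s}\beta^{l+t}}(R)[\lambda]$, i.e. writing $[f_\lambda g]_\mu=\sum_n\lambda^n h^{(n)}_\mu$, each $h^{(n)}$ is an $\alpha^{k+s}\beta^{l+t}$-derivation of $R$.
   Context: All spaces are over $\mathbb{C}$. For a $\mathbb{C}[\partial]$-module $V$, $V[\lambda]=\mathbb{C}[\lambda]\otimes V$. $|a|$ denotes the parity of a homogeneous element. Substitution $\lambda\mapsto-\lambda-\partial$ means: expand in powers of $\lambda$ and replace $\lambda$ by $-\lambda-\partial$, $\partial$ acting on the coefficients. A BiHom-Lie conformal superalgebra $(R,[\cdot_\lambda\cdot],\alpha,\beta)$ is a $\mathbb{Z}_2$-graded $\mathbb{C}[\partial]$-module $R$ with two commuting linear maps $\alpha,\beta$ and a $\mathbb{C}$-linear map $R\otimes R\to R[\lambda]$, $a\otimes b\mapsto[a_\lambda b]$, with $[R_{i\,\lambda}R_j]\subseteq R_{i+j}[\lambda]$, such that for all homogeneous $a,b,c$: (1) $\alpha\partial=\partial\alpha$, $\beta\partial=\partial\beta$;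 (2) $\alpha([a_\lambda b])=[\alpha(a)_\lambda\alpha(b)]$, $\beta([a_\lambda b])=[\beta(a)_\lambda\beta(b)]$; (3) $[(\partial a)_\lambda b]=-\lambda[a_\lambda b]$, $[a_\lambda(\partial b)]=(\partial+\lambda)[a_\lambda b]$; (4) $[\beta(a)_\lambda\alpha(b)]=-(-1)^{|a||b|}[\beta(b)_{-\lambda-\partial}\alpha(a)]$; (5) $[\alpha\beta(a)_\lambda[b_\mu c]]=[[\beta(a)_\lambda b]_{\lambda+\mu}\beta(c)]+(-1)^{|a||b|}[\beta(b)_\mu[\alpha(a)_\lambda c]]$. A conformal linear map $f:R\to R$ of parity $|f|\in\mathbb{Z}_2$ is a family of $\mathbb{C}$-linear maps $f_\lambda:R\to R[\lambda]$ with $f_\lambda\partial=(\partial+\lambda)f_\lambda$ and $f_\lambda(R_\theta)\subseteq R_{\theta+|f|}[\lambda]$. For integers $k,l\ge0$, an $\alpha^k\beta^l$-derivation of $R$ is a homogeneous conformal linear map $f$ with $f_\lambda\circ\alpha=\alpha\circ f_\lambda$, $f_\lambda\circ\beta=\beta\circ f_\lambda$, and $f_\lambda([a_\mu b])=[f_\lambda(a)_{\lambda+\mu}\alpha^k\beta^l(b)]+(-1)^{|a||f|}[\alpha^k\beta^l(a)_\mu f_\lambda(b)]$ for all homogeneous $a,b\in R$. $\mathrm{Der}_{\alpha^k\beta^l}(R)$ denotes the span of the $\alpha^k\beta^l$-derivations. *)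

theory Defs
  imports Complex_Main
begin

text \<open>
Conventions.
 * R is a type 'r with an abelian group structure and a complex scalar
   multiplication sc (a complex vector space, locale module).
 * An element of R[lambda] is encoded by its coefficient function
   p :: nat => 'r (p n is the coefficient of lambda^n), required to have finite support.
 * An element of R[lambda,mu] is encoded by w :: nat => nat => 'r
   (w i j is the coefficient of lambda^i mu^j).
 * The bracket [a_lambda b] is br a b :: nat => 'r; a conformal linear map
   f_lambda is f :: 'r => nat => 'r, f a n = coefficient of lambda^n in f_lambda(a).
 * Parities are booleans (True = odd); Rg p is the homogeneous component R_p.
\<close>

record 'r lcsa =
  sc    :: "complex \<Rightarrow> 'r \<Rightarrow> 'r"
  D     :: "'r \<Rightarrow> 'r"
  Rg    :: "bool \<Rightarrow> 'r set"
  br    :: "'r \<Rightarrow> 'r \<Rightarrow> nat \<Rightarrow> 'r"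
  alph  :: "'r \<Rightarrow> 'r"
  bet   :: "'r \<Rightarrow> 'r"

text \<open>(-1)^{p q} style signs, parities as booleans\<close>
definition sgn2 :: "bool \<Rightarrow> complex" where
  "sgn2 p = (if p then -1 else 1)"

definition fin_supp :: "(nat \<Rightarrow> 'r::zero) \<Rightarrow> bool" where
  "fin_supp p \<longleftrightarrow> finite {n. p n \<noteq> 0}"

text \<open>lambda-shift: if w n m is the coefficient of lambda^n nu^m, then
  shift2 sc w i j is the coefficient of lambda^i mu^j after substituting nu := lambda + mu.\<close>
definition shift2 :: "(complex \<Rightarrow> 'r \<Rightarrow> 'r) \<Rightarrow> (nat \<Rightarrow> nat \<Rightarrow> 'r::ab_group_add) \<Rightarrow> nat \<Rightarrow> nat \<Rightarrow> 'r" where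
  "shift2 s w i j = (\<Sum>n\<in>{..i}. s (of_nat ((i - n + j) choose j)) (w n (i - n + j)))"

text \<open>Substitution lambda := -lambda - partial in p(lambda) = sum lambda^n x_n:
  p(-lambda-partial) = sum_n (-lambda-partial)^n x_n, partial acting on the coefficients.
  Coefficient of lambda^i.\<close>
definition subst_neg :: "(complex \<Rightarrow> 'r \<Rightarrow> 'r) \<Rightarrow> ('r \<Rightarrow> 'r) \<Rightarrow> (nat \<Rightarrow> 'r::ab_group_add) \<Rightarrow> nat \<Rightarrow> 'r" where
  "subst_neg s d p i =
     (\<Sum>n\<in>{n. p n \<noteq> 0 \<and> i \<le> n}. s ((-1) ^ n * of_nat (n choose i)) ((d ^^ (n - i)) (p n)))"

definition lin :: "(complex \<Rightarrow> 'r \<Rightarrow> 'r) \<Rightarrow> ('r::ab_group_add \<Rightarrow> 'r) \<Rightarrow> bool" where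
  "lin s h \<longleftrightarrow> (\<forall>x y. h (x + y) = h x + h y) \<and> (\<forall>c x. h (s c x) = s c (h x))"

definition csubspace :: "(complex \<Rightarrow> 'r \<Rightarrow> 'r) \<Rightarrow> 'r::ab_group_add set \<Rightarrow> bool" where
  "csubspace s S \<longleftrightarrow> 0 \<in> S \<and> (\<forall>x\<in>S. \<forall>y\<in>S. x + y \<in> S) \<and> (\<forall>c. \<forall>x\<in>S. s c x \<in> S)"

text \<open>BiHom-Lie conformal superalgebra (alpha, beta taken to be even, i.e. parity preserving).\<close>
definition BiHom_LCSA :: "('r::ab_group_add) lcsa \<Rightarrow> bool" where
  "BiHom_LCSA R \<longleftrightarrow>
    \<comment> \<open>complex vector space, Z2-grading R = R_0 (+) R_1, C[partial]-module\<close>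
    module (sc R) \<and>
    csubspace (sc R) (Rg R False) \<and> csubspace (sc R) (Rg R True) \<and>
    (\<forall>x. \<exists>!y. fst y \<in> Rg R False \<and> snd y \<in> Rg R True \<and> x = fst y + snd y) \<and>
    lin (sc R) (D R) \<and> (\<forall>p. \<forall>x\<in>Rg R p. D R x \<in> Rg R p) \<and>
    \<comment> \<open>alpha, beta: commuting even linear maps\<close>
    lin (sc R) (alph R) \<and> lin (sc R) (bet R) \<and>
    (\<forall>p. \<forall>x\<in>Rg R p. alph R x \<in> Rg R p \<and> bet R x \<in> Rg R p) \<and>
    (\<forall>x. alph R (bet R x) = bet R (alph R x)) \<and>
    \<comment> \<open>bracket: C-bilinear map R x R -> R[lambda], graded\<close>
    (\<forall>a b. fin_supp (br R a b)) \<and>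
    (\<forall>b n. lin (sc R) (\<lambda>a. br R a b n)) \<and> (\<forall>a n. lin (sc R) (\<lambda>b. br R a b n)) \<and>
    (\<forall>p q a b n. a \<in> Rg R p \<longrightarrow> b \<in> Rg R q \<longrightarrow> br R a b n \<in> Rg R (p \<noteq> q)) \<and>
    \<comment> \<open>(1)\<close>
    (\<forall>x. alph R (D R x) = D R (alph R x)) \<and> (\<forall>x. bet R (D R x) = D R (bet R x)) \<and>
    \<comment> \<open>(2)\<close>
    (\<forall>a b n. alph R (br R a b n) = br R (alph R a) (alph R b) n) \<and>
    (\<forall>a b n. bet R (br R a b n) = br R (bet R a) (bet R b) n) \<and>
    \<comment> \<open>(3)\<close>
    (\<forall>a b n. br R (D R a) b n = (if n = 0 then 0 else - br R a b (n - 1))) \<and>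
    (\<forall>a b n. br R a (D R b) n = D R (br R a b n) + (if n = 0 then 0 else br R a b (n - 1))) \<and>
    \<comment> \<open>(4) skew-symmetry\<close>
    (\<forall>p q a b n. a \<in> Rg R p \<longrightarrow> b \<in> Rg R q \<longrightarrow>
       br R (bet R a) (alph R b) n =
       - sc R (sgn2 (p \<and> q)) (subst_neg (sc R) (D R) (br R (bet R b) (alph R a)) n)) \<and>
    \<comment> \<open>(5) BiHom-Jacobi identity, coefficient of lambda^i mu^j\<close>
    (\<forall>p q a b c i j. a \<in> Rg R p \<longrightarrow> b \<in> Rg R q \<longrightarrow> (c \<in> Rg R False \<or> c \<in> Rg R True) \<longrightarrow>
       br R (alph R (bet R a)) (br R b c j) i =
         shift2 (sc R) (\<lambda>n m. br R (br R (bet R a) b n) (bet R c) m) i j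
         + sc R (sgn2 (p \<and> q)) (br R (bet R b) (br R (alph R a) c i) j))"

definition conf_lin :: "('r::ab_group_add) lcsa \<Rightarrow> bool \<Rightarrow> ('r \<Rightarrow> nat \<Rightarrow> 'r) \<Rightarrow> bool" where
  "conf_lin R pf f \<longleftrightarrow>
    (\<forall>a. fin_supp (f a)) \<and> (\<forall>n. lin (sc R) (\<lambda>a. f a n)) \<and>
    (\<forall>a n. f (D R a) n = D R (f a n) + (if n = 0 then 0 else f a (n - 1))) \<and>
    (\<forall>p a n. a \<in> Rg R p \<longrightarrow> f a n \<in> Rg R (p \<noteq> pf))"

definition hder :: "('r::ab_group_add) lcsa \<Rightarrow> nat \<Rightarrow> nat \<Rightarrow> bool \<Rightarrow> ('r \<Rightarrow> nat \<Rightarrow> 'r) \<Rightarrow> bool" where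
  "hder R k l pf f \<longleftrightarrow>
    conf_lin R pf f \<and>
    (\<forall>a n. f (alph R a) n = alph R (f a n)) \<and> (\<forall>a n. f (bet R a) n = bet R (f a n)) \<and>
    (\<forall>p q a b i j. a \<in> Rg R p \<longrightarrow> b \<in> Rg R q \<longrightarrow>
       f (br R a b j) i =
         shift2 (sc R) (\<lambda>n m. br R (f a n) (((alph R ^^ k) \<circ> (bet R ^^ l)) b) m) i j
         + sc R (sgn2 (p \<and> pf)) (br R (((alph R ^^ k) \<circ> (bet R ^^ l)) a) (f b i) j))"

definition is_der :: "('r::ab_group_add) lcsa \<Rightarrow> nat \<Rightarrow> nat \<Rightarrow> ('r \<Rightarrow> nat \<Rightarrow> 'r) \<Rightarrow> bool" where
  "is_der R k l f \<longleftrightarrow> (\<exists>pf. hder R k l pf f)"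

text \<open>[f_lambda g]_mu(a) = f_lambda(g_{mu-lambda} a) - (-1)^{|f||g|} g_{mu-lambda}(f_lambda a).
  cbr R pf pg f g n a j is the coefficient of lambda^n mu^j, so that
  (\<lambda>a j. cbr R pf pg f g n a j) is h^(n).\<close>
definition cbr :: "('r::ab_group_add) lcsa \<Rightarrow> bool \<Rightarrow> bool \<Rightarrow> ('r \<Rightarrow> nat \<Rightarrow> 'r) \<Rightarrow> ('r \<Rightarrow> nat \<Rightarrow> 'r)
                   \<Rightarrow> nat \<Rightarrow> 'r \<Rightarrow> nat \<Rightarrow> 'r" where
  "cbr R pf pg f g i a j =
     (\<Sum>p\<in>{..i}. sc R ((-1) ^ (i - p) * of_nat ((i - p + j) choose (i - p))) (f (g a (i - p + j)) p))
     - sc R (sgn2 (pf \<and> pg))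
         (\<Sum>p\<in>{..i}. sc R ((-1) ^ (i - p) * of_nat ((i - p + j) choose (i - p))) (g (f a p) (i - p + j)))"

end

theory Submission
  imports Defs
begin

definition ev :: "(complex \<Rightarrow> 'r \<Rightarrow> 'r) \<Rightarrow> (nat \<Rightarrow> 'r::ab_group_add) \<Rightarrow> complex \<Rightarrow> 'r" where
  "ev S p x = (\<Sum>n\<in>{n. p n \<noteq> 0}. S (x ^ n) (p n))"

definition bd1 :: "nat \<Rightarrow> (nat \<Rightarrow> 'r::zero) \<Rightarrow> bool" where
  "bd1 N p \<longleftrightarrow> (\<forall>n\<ge>N. p n = 0)"
definition bd2 :: "nat \<Rightarrow> (nat \<Rightarrow> nat \<Rightarrow> 'r::zero) \<Rightarrow> bool" where
  "bd2 N w \<longleftrightarrow> (\<forall>i j. N \<le> i \<or> N \<le> j \<longrightarrow> w i j = 0)"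
definition bd3 :: "nat \<Rightarrow> (nat \<Rightarrow> nat \<Rightarrow> nat \<Rightarrow> 'r::zero) \<Rightarrow> bool" where
  "bd3 N w \<longleftrightarrow> (\<forall>i j k. N \<le> i \<or> N \<le> j \<or> N \<le> k \<longrightarrow> w i j k = 0)"

lemma bd1_mono: "bd1 N p \<Longrightarrow> N \<le> M \<Longrightarrow> bd1 M p" by (auto simp: bd1_def)
lemma bd2_mono: "bd2 N p \<Longrightarrow> N \<le> M \<Longrightarrow> bd2 M p" by (auto simp: bd2_def)
lemma bd3_mono: "bd3 N p \<Longrightarrow> N \<le> M \<Longrightarrow> bd3 M p" by (auto simp: bd3_def)

lemma fin_supp_bd1: "fin_supp p \<longleftrightarrow> (\<exists>N. bd1 N p)"
proof
  assume "fin_supp p"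
  then obtain N where "\<forall>n\<in>{n. p n \<noteq> 0}. n < N"
    unfolding fin_supp_def using finite_nat_set_iff_bounded by blast
  then have "bd1 N p" unfolding bd1_def by (meson leD mem_Collect_eq)
  then show "\<exists>N. bd1 N p" ..
next
  assume "\<exists>N. bd1 N p"
  then obtain N where "bd1 N p" ..
  then have "{n. p n \<noteq> 0} \<subseteq> {..<N}" unfolding bd1_def by (auto simp: not_less[symmetric])
  then show "fin_supp p" unfolding fin_supp_def using finite_subset by blast
qed

lemma bd1_fin_supp: "bd1 N p \<Longrightarrow> fin_supp p" using fin_supp_bd1 by blast

lemma ev_eq:
  assumes "module S" "finite A" "{n. p n \<noteq> 0} \<subseteq> A"
  shows "ev S p x = (\<Sum>n\<in>A. S (x ^ n) (p n))"
  unfolding ev_def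
  by (rule sum.mono_neutral_left) (use assms module.scale_zero_right in auto)

lemma ev_bd:
  assumes "module S" "bd1 N p"
  shows "ev S p x = (\<Sum>n<N. S (x ^ n) (p n))"
  by (rule ev_eq) (use assms in \<open>auto simp: bd1_def not_less[symmetric]\<close>)

lemma ev_zero[simp]: "ev S (\<lambda>n. 0) x = 0" by (simp add: ev_def)

lemma lin_additive: "lin S T \<Longrightarrow> additive T"
  unfolding lin_def additive_def by auto

lemma lin_zero: "lin S T \<Longrightarrow> T 0 = 0"
  using additive.zero lin_additive by blast
lemma lin_diff: "lin S T \<Longrightarrow> T (a - b) = T a - T b"
  using additive.diff lin_additive by blast
lemma lin_minus: "lin S T \<Longrightarrow> T (- a) = - T a"
  using additive.minus lin_additive by blast
lemma lin_add: "lin S T \<Longrightarrow> T (a + b) = T a + T b"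
  by (simp add: lin_def)
lemma lin_sc: "lin S T \<Longrightarrow> T (S c a) = S c (T a)"
  by (simp add: lin_def)
lemma lin_sum: "lin S T \<Longrightarrow> T (sum h A) = (\<Sum>a\<in>A. T (h a))"
  using additive.sum lin_additive by blast

lemma lin_comp: "lin S T \<Longrightarrow> lin S U \<Longrightarrow> lin S (\<lambda>a. T (U a))"
  by (simp add: lin_def)
lemma lin_id: "lin S (\<lambda>a. a)" by (simp add: lin_def)
lemma lin_scale: "module S \<Longrightarrow> lin S (S c)"
  unfolding lin_def by (simp add: module.scale_right_distrib module.scale_left_commute)
lemma lin_funpow: "lin S T \<Longrightarrow> lin S (T ^^ n)"
  by (induction n) (auto simp: lin_def)
lemma lin_addf: "module S \<Longrightarrow> lin S T \<Longrightarrow> lin S U \<Longrightarrow> lin S (\<lambda>a. T a + U a)"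
  by (simp add: lin_def module.scale_right_distrib)

lemma ev_lin:
  assumes "module S" "lin S T" "fin_supp p"
  shows "T (ev S p x) = ev S (\<lambda>n. T (p n)) x"
proof -
  obtain N where N: "bd1 N p" using assms(3) fin_supp_bd1 by blast
  have N2: "bd1 N (\<lambda>n. T (p n))" using N lin_zero[OF assms(2)] by (simp add: bd1_def)
  show ?thesis
    unfolding ev_bd[OF assms(1) N] ev_bd[OF assms(1) N2]
    by (simp add: lin_sum[OF assms(2)] lin_sc[OF assms(2)])
qed

lemma ev_add:
  assumes "module S" "fin_supp p" "fin_supp q"
  shows "ev S (\<lambda>n. p n + q n) x = ev S p x + ev S q x"
proof -
  obtain N where N: "bd1 N p" using assms(2) fin_supp_bd1 by blast
  obtain M where M: "bd1 M q" using assms(3) fin_supp_bd1 by blast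
  have a: "bd1 (max N M) p" "bd1 (max N M) q" using N M by (auto intro: bd1_mono)
  then have b: "bd1 (max N M) (\<lambda>n. p n + q n)" by (simp add: bd1_def)
  show ?thesis unfolding ev_bd[OF assms(1) a(1)] ev_bd[OF assms(1) a(2)] ev_bd[OF assms(1) b]
    by (simp add: module.scale_right_distrib[OF assms(1)] sum.distrib)
qed

lemma ev_sc:
  assumes "module S" "fin_supp p"
  shows "ev S (\<lambda>n. S c (p n)) x = S c (ev S p x)"
  using ev_lin[OF assms(1) lin_scale[OF assms(1)] assms(2)] by simp

lemma ev_diff:
  assumes "module S" "fin_supp p" "fin_supp q"
  shows "ev S (\<lambda>n. p n - q n) x = ev S p x - ev S q x"
proof -
  have m: "fin_supp (\<lambda>n. - q n)" using assms(3) unfolding fin_supp_def by simp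
  have "ev S (\<lambda>n. - q n) x = - ev S q x"
    using ev_lin[OF assms(1) _ assms(3), of uminus] assms(1)
    by (simp add: lin_def module.scale_minus_right)
  then show ?thesis using ev_add[OF assms(1) assms(2) m] by simp
qed

lemma fin_supp_add: "fin_supp (p::nat\<Rightarrow>'a::ab_group_add) \<Longrightarrow> fin_supp q \<Longrightarrow> fin_supp (\<lambda>n. p n + q n)"
  unfolding fin_supp_def by (rule finite_subset[of _ "{n. p n \<noteq> 0} \<union> {n. q n \<noteq> 0}"]) auto
lemma fin_supp_diff: "fin_supp (p::nat\<Rightarrow>'a::ab_group_add) \<Longrightarrow> fin_supp q \<Longrightarrow> fin_supp (\<lambda>n. p n - q n)"
  unfolding fin_supp_def by (rule finite_subset[of _ "{n. p n \<noteq> 0} \<union> {n. q n \<noteq> 0}"]) auto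
lemma fin_supp_T: "T 0 = 0 \<Longrightarrow> fin_supp p \<Longrightarrow> fin_supp (\<lambda>n. T (p n))"
  unfolding fin_supp_def by (rule finite_subset[of _ "{n. p n \<noteq> 0}"]) auto

lemma ev_shift:
  assumes "module S" "fin_supp p"
  shows "ev S (\<lambda>j. if j = 0 then 0 else p (j - 1)) y = S y (ev S p y)"
proof -
  interpret m: module S by (rule assms(1))
  obtain N where N: "bd1 N p" using assms(2) fin_supp_bd1 by blast
  define h where "h = (\<lambda>j. S (y ^ j) (if j = 0 then 0 else p (j - 1)))"
  have N2: "bd1 (Suc N) (\<lambda>j. if j = 0 then 0 else p (j - 1))" using N by (auto simp: bd1_def)
  have "(\<Sum>j<Suc N. h j) = h 0 + (\<Sum>i<N. h (Suc i))"
    by (rule sum.lessThan_Suc_shift)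
  also have "h 0 = 0" by (simp add: h_def)
  also have "(\<Sum>i<N. h (Suc i)) = (\<Sum>i<N. S y (S (y ^ i) (p i)))"
    by (rule sum.cong) (simp_all add: h_def)
  also have "0 + (\<Sum>i<N. S y (S (y ^ i) (p i))) = S y (\<Sum>i<N. S (y ^ i) (p i))"
    by (simp add: m.scale_sum_right)
  finally show ?thesis unfolding ev_bd[OF assms(1) N] ev_bd[OF assms(1) N2] h_def .
qed

lemma lin_ev:
  assumes "module S" "\<And>v. fin_supp (Phi v)" "\<And>n. lin S (\<lambda>v. Phi v n)"
  shows "lin S (\<lambda>v. ev S (Phi v) x)"
  unfolding lin_def
proof (intro conjI allI)
  fix a b
  have "Phi (a + b) = (\<lambda>n. Phi a n + Phi b n)" using assms(3) by (auto simp: lin_def)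
  then have "ev S (Phi (a + b)) x = ev S (\<lambda>n. Phi a n + Phi b n) x" by (rule arg_cong)
  also have "\<dots> = ev S (Phi a) x + ev S (Phi b) x"
    by (rule ev_add[OF assms(1) assms(2) assms(2)])
  finally show "ev S (Phi (a + b)) x = ev S (Phi a) x + ev S (Phi b) x" .
next
  fix c a
  have "Phi (S c a) = (\<lambda>n. S c (Phi a n))" using assms(3) by (auto simp: lin_def)
  then have "ev S (Phi (S c a)) x = ev S (\<lambda>n. S c (Phi a n)) x" by (rule arg_cong)
  also have "\<dots> = S c (ev S (Phi a) x)"
    by (rule ev_sc[OF assms(1) assms(2)])
  finally show "ev S (Phi (S c a)) x = S c (ev S (Phi a) x)" .
qed

lemma U1_aux:
  fixes S :: "complex \<Rightarrow> 'r::ab_group_add \<Rightarrow> 'r"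
  assumes m: "module S"
  shows "infinite X \<Longrightarrow> (\<forall>x\<in>X. (\<Sum>n<N. S (x ^ n) (p n)) = 0) \<Longrightarrow> (\<forall>n<N. p n = 0)"
proof (induction N arbitrary: p X)
  case 0
  then show ?case by simp
next
  case (Suc N)
  interpret m: module S by (rule m)
  define P where "P x = (\<Sum>n<Suc N. S (x ^ n) (p n))" for x
  obtain a where a: "a \<in> X" using Suc.prems(1) by (metis finite.emptyI ex_in_conv)
  define q where "q i = (\<Sum>k = Suc i..N. S (a ^ (k - Suc i)) (p k))" for i
  have key: "P x - P a = S (x - a) (\<Sum>i<N. S (x ^ i) (q i))" for x
  proof -
    have "P x - P a = (\<Sum>n<Suc N. S (x ^ n - a ^ n) (p n))"
      by (simp add: P_def sum_subtractf m.scale_left_diff_distrib)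
    also have "\<dots> = (\<Sum>n<Suc N. S (x - a) (\<Sum>i<n. S (a ^ (n - Suc i) * x ^ i) (p n)))"
    proof (rule sum.cong)
      fix n
      show "S (x ^ n - a ^ n) (p n) = S (x - a) (\<Sum>i<n. S (a ^ (n - Suc i) * x ^ i) (p n))"
        by (simp add: power_diff_sumr2 flip: m.scale_sum_left)
    qed simp
    also have "\<dots> = S (x - a) (\<Sum>n<Suc N. \<Sum>i<n. S (a ^ (n - Suc i) * x ^ i) (p n))"
      by (rule m.scale_sum_right[symmetric])
    also have "(\<Sum>n<Suc N. \<Sum>i<n. S (a ^ (n - Suc i) * x ^ i) (p n))
        = (\<Sum>i<N. \<Sum>n = Suc i..N. S (a ^ (n - Suc i) * x ^ i) (p n))"
      by (simp only: lessThan_Suc_atMost sum.nested_swap')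
    also have "\<dots> = (\<Sum>i<N. S (x ^ i) (q i))"
      unfolding q_def by (simp add: m.scale_sum_right mult.commute)
    finally show ?thesis .
  qed
  have Pa: "P a = 0" using Suc.prems(2) a P_def by simp
  have "\<forall>x\<in>X - {a}. (\<Sum>i<N. S (x ^ i) (q i)) = 0"
  proof
    fix x assume x: "x \<in> X - {a}"
    then have "P x = 0" using Suc.prems(2) P_def by simp
    then have "S (x - a) (\<Sum>i<N. S (x ^ i) (q i)) = 0" using key[of x] Pa by simp
    then have "S (1 / (x - a)) (S (x - a) (\<Sum>i<N. S (x ^ i) (q i))) = 0" by simp
    then show "(\<Sum>i<N. S (x ^ i) (q i)) = 0" using x by simp
  qed
  then have q0: "\<forall>i<N. q i = 0" using Suc.IH[of "X - {a}" q] Suc.prems(1) by simp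
  have Pall: "P x = 0" for x
  proof -
    have "(\<Sum>i<N. S (x ^ i) (q i)) = 0" using q0 by simp
    then show ?thesis using key[of x] Pa by simp
  qed
  have p0: "p 0 = 0" using Pall[of 0] unfolding P_def
    by (simp add: sum.lessThan_Suc_shift del: sum.lessThan_Suc)
  have "\<forall>x\<in>X - {0}. (\<Sum>i<N. S (x ^ i) (p (Suc i))) = 0"
  proof
    fix x assume x: "x \<in> X - {0}"
    have "P x = S x (\<Sum>i<N. S (x ^ i) (p (Suc i)))" unfolding P_def
      by (simp add: sum.lessThan_Suc_shift p0 m.scale_sum_right del: sum.lessThan_Suc)
    then have "S (1 / x) (S x (\<Sum>i<N. S (x ^ i) (p (Suc i)))) = 0" using Pall by simp
    then show "(\<Sum>i<N. S (x ^ i) (p (Suc i))) = 0" using x by simp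
  qed
  then have "\<forall>i<N. p (Suc i) = 0" using Suc.IH[of "X - {0}" "\<lambda>i. p (Suc i)"] Suc.prems(1) by simp
  then show ?case using p0 by (auto simp: less_Suc_eq_0_disj)
qed

lemma U1:
  assumes "module S" "fin_supp p" "\<And>x. ev S p x = 0"
  shows "p = (\<lambda>n. 0)"
proof -
  obtain N where N: "bd1 N p" using assms(2) fin_supp_bd1 by blast
  have "\<forall>n<N. p n = 0"
    by (rule U1_aux[OF assms(1), of UNIV]) (use assms(3) ev_bd[OF assms(1) N] infinite_UNIV_char_0 in auto)
  then show ?thesis using N by (auto simp: bd1_def fun_eq_iff not_less[symmetric])
qed

lemma bd2_row: "bd2 N w \<Longrightarrow> bd1 N (w i)" by (auto simp: bd2_def bd1_def)
lemma bd2_row_supp: "bd2 N w \<Longrightarrow> fin_supp (w i)" using bd2_row bd1_fin_supp by blast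
lemma bd2_col: "bd2 N w \<Longrightarrow> bd1 N (\<lambda>i. ev S (w i) y)"
  by (auto simp: bd2_def bd1_def ev_def)
lemma bd2_col_supp: "bd2 N w \<Longrightarrow> fin_supp (\<lambda>i. ev S (w i) y)" using bd2_col bd1_fin_supp by blast
lemma bd3_slice: "bd3 N w \<Longrightarrow> bd2 N (w i)" by (auto simp: bd3_def bd2_def)
lemma bd3_col: "bd3 N w \<Longrightarrow> bd2 N (\<lambda>i j. ev S (w i j) z)"
  by (auto simp: bd3_def bd2_def ev_def)
lemma bd3_fiber: "bd3 N w \<Longrightarrow> bd1 N (w i j)" by (auto simp: bd3_def bd1_def)

lemma U2:
  assumes "module S" "bd2 N w" "\<And>x y. ev S (\<lambda>i. ev S (w i) y) x = 0"
  shows "w i j = 0"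
proof -
  have "(\<lambda>i. ev S (w i) y) = (\<lambda>i. 0)" for y
    by (rule U1[OF assms(1) bd2_col_supp[OF assms(2)] assms(3)])
  then have "\<And>y. ev S (w i) y = 0" by meson
  then have "w i = (\<lambda>j. 0)" by (rule U1[OF assms(1) bd2_row_supp[OF assms(2)]])
  then show ?thesis by simp
qed

lemma U3:
  assumes "module S" "bd3 N w" "\<And>x y z. ev S (\<lambda>i. ev S (\<lambda>j. ev S (w i j) z) y) x = 0"
  shows "w i j k = 0"
proof -
  have "ev S (w i j) z = 0" for z
    by (rule U2[OF assms(1) bd3_col[OF assms(2)] assms(3)])
  then have "w i j = (\<lambda>k. 0)" by (rule U1[OF assms(1) bd1_fin_supp[OF bd3_fiber[OF assms(2)]]])
  then show ?thesis by simp
qed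

lemma ev2_add:
  assumes "module S" "bd2 N w1" "bd2 M w2"
  shows "ev S (\<lambda>i. ev S (\<lambda>j. w1 i j + w2 i j) y) x
       = ev S (\<lambda>i. ev S (w1 i) y) x + ev S (\<lambda>i. ev S (w2 i) y) x"
proof -
  have "ev S (\<lambda>i. ev S (\<lambda>j. w1 i j + w2 i j) y) x = ev S (\<lambda>i. ev S (w1 i) y + ev S (w2 i) y) x"
    using ev_add[OF assms(1) bd2_row_supp[OF assms(2)] bd2_row_supp[OF assms(3)]] by simp
  also have "\<dots> = ev S (\<lambda>i. ev S (w1 i) y) x + ev S (\<lambda>i. ev S (w2 i) y) x"
    by (rule ev_add[OF assms(1) bd2_col_supp[OF assms(2)] bd2_col_supp[OF assms(3)]])
  finally show ?thesis .
qed

lemma ev2_diff: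
  assumes "module S" "bd2 N w1" "bd2 M w2"
  shows "ev S (\<lambda>i. ev S (\<lambda>j. w1 i j - w2 i j) y) x
       = ev S (\<lambda>i. ev S (w1 i) y) x - ev S (\<lambda>i. ev S (w2 i) y) x"
proof -
  have "ev S (\<lambda>i. ev S (\<lambda>j. w1 i j - w2 i j) y) x = ev S (\<lambda>i. ev S (w1 i) y - ev S (w2 i) y) x"
    using ev_diff[OF assms(1) bd2_row_supp[OF assms(2)] bd2_row_supp[OF assms(3)]] by simp
  also have "\<dots> = ev S (\<lambda>i. ev S (w1 i) y) x - ev S (\<lambda>i. ev S (w2 i) y) x"
    by (rule ev_diff[OF assms(1) bd2_col_supp[OF assms(2)] bd2_col_supp[OF assms(3)]])
  finally show ?thesis .
qed

lemma ev2_sc: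
  assumes "module S" "bd2 N w"
  shows "ev S (\<lambda>i. ev S (\<lambda>j. S c (w i j)) y) x = S c (ev S (\<lambda>i. ev S (w i) y) x)"
proof -
  have "ev S (\<lambda>i. ev S (\<lambda>j. S c (w i j)) y) x = ev S (\<lambda>i. S c (ev S (w i) y)) x"
    using ev_sc[OF assms(1) bd2_row_supp[OF assms(2)]] by simp
  also have "\<dots> = S c (ev S (\<lambda>i. ev S (w i) y) x)"
    by (rule ev_sc[OF assms(1) bd2_col_supp[OF assms(2)]])
  finally show ?thesis .
qed

lemma bd2_add: "bd2 N w1 \<Longrightarrow> bd2 M w2 \<Longrightarrow> bd2 (max N M) (\<lambda>i j. (w1 i j::'a::ab_group_add) + w2 i j)"
  by (auto simp: bd2_def)
lemma bd2_diff: "bd2 N w1 \<Longrightarrow> bd2 M w2 \<Longrightarrow> bd2 (max N M) (\<lambda>i j. (w1 i j::'a::ab_group_add) - w2 i j)"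
  by (auto simp: bd2_def)
lemma bd2_T: "T 0 = 0 \<Longrightarrow> bd2 N w \<Longrightarrow> bd2 N (\<lambda>i j. T (w i j))"
  by (auto simp: bd2_def)
lemma bd3_add: "bd3 N w1 \<Longrightarrow> bd3 M w2 \<Longrightarrow> bd3 (max N M) (\<lambda>i j k. (w1 i j k::'a::ab_group_add) + w2 i j k)"
  by (auto simp: bd3_def)
lemma bd3_diff: "bd3 N w1 \<Longrightarrow> bd3 M w2 \<Longrightarrow> bd3 (max N M) (\<lambda>i j k. (w1 i j k::'a::ab_group_add) - w2 i j k)"
  by (auto simp: bd3_def)

lemma ev3_add:
  assumes "module S" "bd3 N w1" "bd3 M w2"
  shows "ev S (\<lambda>i. ev S (\<lambda>j. ev S (\<lambda>k. w1 i j k + w2 i j k) z) y) x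
       = ev S (\<lambda>i. ev S (\<lambda>j. ev S (w1 i j) z) y) x + ev S (\<lambda>i. ev S (\<lambda>j. ev S (w2 i j) z) y) x"
proof -
  have "ev S (\<lambda>k. w1 i j k + w2 i j k) z = ev S (w1 i j) z + ev S (w2 i j) z" for i j
    by (rule ev_add[OF assms(1) bd1_fin_supp[OF bd3_fiber[OF assms(2)]] bd1_fin_supp[OF bd3_fiber[OF assms(3)]]])
  then show ?thesis
    using ev2_add[OF assms(1) bd3_col[OF assms(2)] bd3_col[OF assms(3)]] by simp
qed

lemma ev3_diff:
  assumes "module S" "bd3 N w1" "bd3 M w2"
  shows "ev S (\<lambda>i. ev S (\<lambda>j. ev S (\<lambda>k. w1 i j k - w2 i j k) z) y) x
       = ev S (\<lambda>i. ev S (\<lambda>j. ev S (w1 i j) z) y) x - ev S (\<lambda>i. ev S (\<lambda>j. ev S (w2 i j) z) y) x"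
proof -
  have "ev S (\<lambda>k. w1 i j k - w2 i j k) z = ev S (w1 i j) z - ev S (w2 i j) z" for i j
    by (rule ev_diff[OF assms(1) bd1_fin_supp[OF bd3_fiber[OF assms(2)]] bd1_fin_supp[OF bd3_fiber[OF assms(3)]]])
  then show ?thesis
    using ev2_diff[OF assms(1) bd3_col[OF assms(2)] bd3_col[OF assms(3)]] by simp
qed

lemma ev3_sc:
  assumes "module S" "bd3 N w"
  shows "ev S (\<lambda>i. ev S (\<lambda>j. ev S (\<lambda>k. S c (w i j k)) z) y) x
       = S c (ev S (\<lambda>i. ev S (\<lambda>j. ev S (w i j) z) y) x)"
proof -
  have "ev S (\<lambda>k. S c (w i j k)) z = S c (ev S (w i j) z)" for i j
    by (rule ev_sc[OF assms(1) bd1_fin_supp[OF bd3_fiber[OF assms(2)]]])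
  then show ?thesis
    using ev2_sc[OF assms(1) bd3_col[OF assms(2)]] by simp
qed

lemma fin_max:
  fixes Q :: "'a \<Rightarrow> nat \<Rightarrow> bool"
  assumes "finite A" "\<forall>a\<in>A. \<exists>N. Q a N" "\<And>a N N'. Q a N \<Longrightarrow> N \<le> N' \<Longrightarrow> Q a N'"
  shows "\<exists>N. \<forall>a\<in>A. Q a N"
  using assms(1,2)
proof (induction A rule: finite_induct)
  case empty
  then show ?case by simp
next
  case (insert x F)
  then obtain N where N: "\<forall>a\<in>F. Q a N" by auto
  obtain M where M: "Q x M" using insert.prems by auto
  have "\<forall>a\<in>insert x F. Q a (max N M)"
  proof
    fix a assume "a \<in> insert x F"
    then show "Q a (max N M)"
    proof
      assume "a = x" then show ?thesis using assms(3)[OF M, of "max N M"] by (simp add: max.cobounded2)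
    next
      assume "a \<in> F" then show ?thesis using N assms(3)[of a N "max N M"] by simp
    qed
  qed
  then show ?case ..
qed

lemma B1:
  assumes "\<And>p. Phi 0 p = 0" "\<And>v. fin_supp (Phi v)" "bd1 N u"
  shows "\<exists>M. bd2 M (\<lambda>m p. Phi (u m) p)"
proof -
  have "\<exists>M0. \<forall>m\<in>{..<N}. bd1 M0 (Phi (u m))"
    by (rule fin_max) (use assms(2) fin_supp_bd1 bd1_mono in auto)
  then obtain M0 where M0: "\<forall>m\<in>{..<N}. bd1 M0 (Phi (u m))" ..
  have "bd2 (max N M0) (\<lambda>m p. Phi (u m) p)"
    unfolding bd2_def
  proof (intro allI impI)
    fix m p assume h: "max N M0 \<le> m \<or> max N M0 \<le> p"
    show "Phi (u m) p = 0"
    proof (cases "m < N")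
      case True
      then show ?thesis using h M0 by (auto simp: bd1_def)
    next
      case False
      then show ?thesis using assms(1,3) by (auto simp: bd1_def)
    qed
  qed
  then show ?thesis ..
qed

lemma B2:
  assumes "\<And>p. Phi 0 p = 0" "\<And>v. fin_supp (Phi v)" "bd2 N u"
  shows "\<exists>M. bd3 M (\<lambda>i j p. Phi (u i j) p)"
proof -
  have "\<exists>M0. \<forall>ij\<in>{..<N} \<times> {..<N}. bd1 M0 (Phi (u (fst ij) (snd ij)))"
    by (rule fin_max) (use assms(2) fin_supp_bd1 bd1_mono in auto)
  then obtain M0 where M0: "\<forall>ij\<in>{..<N} \<times> {..<N}. bd1 M0 (Phi (u (fst ij) (snd ij)))" ..
  have "bd3 (max N M0) (\<lambda>i j p. Phi (u i j) p)"
    unfolding bd3_def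
  proof (intro allI impI)
    fix i j p assume h: "max N M0 \<le> i \<or> max N M0 \<le> j \<or> max N M0 \<le> p"
    show "Phi (u i j) p = 0"
    proof (cases "i < N \<and> j < N")
      case True
      then have "bd1 M0 (Phi (u i j))" using M0 by auto
      then show ?thesis using h True by (auto simp: bd1_def)
    next
      case False
      then show ?thesis using assms(1,3) by (auto simp: bd2_def)
    qed
  qed
  then show ?thesis ..
qed

lemma B3:
  assumes "\<And>i j. Phi 0 i j = 0" "\<And>v. \<exists>N. bd2 N (Phi v)" "bd1 N u"
  shows "\<exists>M. bd3 M (\<lambda>i i' j. Phi (u j) i i')"
proof -
  have "\<exists>M0. \<forall>j\<in>{..<N}. bd2 M0 (Phi (u j))"
    by (rule fin_max) (use assms(2) bd2_mono in auto)
  then obtain M0 where M0: "\<forall>j\<in>{..<N}. bd2 M0 (Phi (u j))" ..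
  have "bd3 (max N M0) (\<lambda>i i' j. Phi (u j) i i')"
    unfolding bd3_def
  proof (intro allI impI)
    fix i i' j assume h: "max N M0 \<le> i \<or> max N M0 \<le> i' \<or> max N M0 \<le> j"
    show "Phi (u j) i i' = 0"
    proof (cases "j < N")
      case True
      then have "bd2 M0 (Phi (u j))" using M0 by auto
      then show ?thesis using h True by (auto simp: bd2_def)
    next
      case False
      then show ?thesis using assms(1,3) by (auto simp: bd1_def)
    qed
  qed
  then show ?thesis ..
qed

definition TT :: "(complex \<Rightarrow> 'r \<Rightarrow> 'r) \<Rightarrow> complex \<Rightarrow> (nat \<Rightarrow> nat \<Rightarrow> 'r::ab_group_add) \<Rightarrow> nat \<Rightarrow> nat \<Rightarrow> 'r" where
  "TT S c V i j = (\<Sum>p\<in>{..i}. S (c ^ (i - p) * of_nat ((i - p + j) choose (i - p))) (V p (i - p + j)))"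

lemma TT_bd2:
  assumes "module S" "bd2 N V"
  shows "bd2 (2 * N) (TT S c V)"
  unfolding bd2_def
proof (intro allI impI)
  interpret m: module S by (rule assms(1))
  fix i j assume h: "2 * N \<le> i \<or> 2 * N \<le> j"
  have "V p (i - p + j) = 0" if "p \<le> i" for p
  proof -
    have "N \<le> p \<or> N \<le> i - p + j" using h that by auto
    then show ?thesis using assms(2) by (auto simp: bd2_def)
  qed
  then show "TT S c V i j = 0" unfolding TT_def by simp
qed

lemma TT_zero:
  assumes "module S" "\<And>p m. V p m = 0"
  shows "TT S c V i j = 0"
proof -
  interpret m: module S by (rule assms(1))
  show ?thesis unfolding TT_def using assms(2) by simp
qed

lemma shift2_TT: "shift2 S w = TT S 1 w"
  unfolding shift2_def TT_def fun_eq_iff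
proof (intro allI sum.cong refl)
  fix i j n :: nat assume "n \<in> {..i}"
  have "(i - n + j) choose j = (i - n + j) choose (i - n)"
    using binomial_symmetric[of j "i - n + j"] by simp
  then show "S (of_nat ((i - n + j) choose j)) (w n (i - n + j)) =
         S (1 ^ (i - n) * of_nat ((i - n + j) choose (i - n))) (w n (i - n + j))" by simp
qed

lemma G:
  assumes "module S" "bd2 N V"
  shows "ev S (\<lambda>i. ev S (TT S c V i) y) x
       = (\<Sum>p<N. S (x ^ p) (\<Sum>m<N. S ((y + c * x) ^ m) (V p m)))"
proof -
  interpret m: module S by (rule assms(1))
  have B2: "bd2 (2 * N) (TT S c V)" by (rule TT_bd2[OF assms])
  define t where "t = (\<lambda>(i, j, p). S (x ^ i * (y ^ j * (c ^ (i - p) * of_nat ((i - p + j) choose (i - p)))))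
                                 (V p (i - p + j)))"
  define A where "A = (SIGMA i:{..<2*N}. SIGMA j:{..<2*N}. {..i})"
  define u where "u = (\<lambda>(p, m, k). S (x ^ p * (of_nat (m choose k) * y ^ k * (c * x) ^ (m - k))) (V p m))"
  define B where "B = (SIGMA p:{..<N}. SIGMA m:{..<N}. {..m})"
  define h where "h = (\<lambda>(p::nat, m::nat, k::nat). (p + (m - k), k, p))"
  have L: "ev S (\<lambda>i. ev S (TT S c V i) y) x = sum t A"
  proof -
    have "ev S (\<lambda>i. ev S (TT S c V i) y) x = (\<Sum>i<2*N. S (x ^ i) (\<Sum>j<2*N. S (y ^ j) (TT S c V i j)))"
      using ev_bd[OF assms(1) bd2_col[OF B2, of S y]] ev_bd[OF assms(1) bd2_row[OF B2]] by simp
    also have "\<dots> = (\<Sum>i<2*N. \<Sum>j<2*N. \<Sum>p\<in>{..i}. t (i, j, p))"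
      unfolding TT_def t_def by (simp add: m.scale_sum_right)
    also have "\<dots> = sum t A"
      unfolding A_def by (simp add: sum.Sigma)
    finally show ?thesis .
  qed
  have R: "(\<Sum>p<N. S (x ^ p) (\<Sum>m<N. S ((y + c * x) ^ m) (V p m))) = sum u B"
  proof -
    have "(\<Sum>p<N. S (x ^ p) (\<Sum>m<N. S ((y + c * x) ^ m) (V p m)))
        = (\<Sum>p<N. \<Sum>m<N. \<Sum>k\<in>{..m}. u (p, m, k))"
      unfolding u_def
      by (simp add: m.scale_sum_right binomial_ring[of y "c * x"] m.scale_sum_left sum_distrib_left)
    also have "\<dots> = sum u B"
      unfolding B_def by (simp add: sum.Sigma)
    finally show ?thesis .
  qed
  have inj: "inj_on h B"
    unfolding inj_on_def h_def B_def by auto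
  have uth: "u b = t (h b)" if "b \<in> B" for b
  proof -
    obtain p m k where b: "b = (p, m, k)" by (cases b) auto
    have km: "k \<le> m" using that b B_def by auto
    have e1: "p + (m - k) - p = m - k" by simp
    have e2: "m - k + k = m" using km by simp
    have e3: "m choose (m - k) = m choose k" using binomial_symmetric[OF km] by simp
    have sc: "x ^ p * (of_nat (m choose k) * y ^ k * (c * x) ^ (m - k))
        = x ^ (p + (m - k)) * (y ^ k * (c ^ (m - k) * of_nat (m choose (m - k))))"
      by (simp add: power_add power_mult_distrib e3)
    have th: "t (h b) = S (x ^ (p + (m - k)) * (y ^ k * (c ^ (m - k) * of_nat (m choose (m - k))))) (V p m)"
      unfolding b t_def h_def by (simp only: prod.case e1 e2)
    have ub: "u b = S (x ^ p * (of_nat (m choose k) * y ^ k * (c * x) ^ (m - k))) (V p m)"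
      unfolding b u_def by (simp only: prod.case)
    show ?thesis unfolding ub th sc ..
  qed
  have "sum u B = sum (t \<circ> h) B" by (rule sum.cong) (auto simp: uth)
  also have "\<dots> = sum t (h ` B)" by (rule sum.reindex[OF inj, symmetric])
  also have "\<dots> = sum t A"
  proof (rule sum.mono_neutral_left)
    show "finite A" unfolding A_def by auto
    show "h ` B \<subseteq> A" unfolding A_def B_def h_def by auto
    show "\<forall>a\<in>A - h ` B. t a = 0"
    proof
      fix a assume a: "a \<in> A - h ` B"
      obtain i j p where ap: "a = (i, j, p)" by (cases a) auto
      have pi: "p \<le> i" using a ap A_def by auto
      have "\<not> (p < N \<and> i - p + j < N)"
      proof
        assume hh: "p < N \<and> i - p + j < N"
        then have "(p, i - p + j, j) \<in> B" unfolding B_def by auto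
        moreover have "h (p, i - p + j, j) = a" unfolding h_def ap using pi by auto
        ultimately show False using a by blast
      qed
      then have "V p (i - p + j) = 0" using assms(2) by (auto simp: bd2_def not_less)
      then show "t a = 0" unfolding t_def ap by simp
    qed
  qed
  finally show ?thesis using L R by simp
qed

lemma G':
  assumes "module S" "bd2 N V"
  shows "ev S (\<lambda>i. ev S (TT S c V i) y) x = ev S (\<lambda>p. ev S (V p) (y + c * x)) x"
  unfolding G[OF assms] using ev_bd[OF assms(1) bd2_col[OF assms(2), of S "y + c * x"]] ev_bd[OF assms(1) bd2_row[OF assms(2)]]
  by simp

lemma bd2_swap: "bd2 N w \<Longrightarrow> bd2 N (\<lambda>i j. w j i)" by (auto simp: bd2_def)

lemma TT_bd3:
  assumes "module S" "bd3 N w"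
  shows "bd3 (2 * N) (\<lambda>i. TT S c (w i))"
  unfolding bd3_def
proof (intro allI impI)
  fix i j k assume h: "2 * N \<le> i \<or> 2 * N \<le> j \<or> 2 * N \<le> k"
  show "TT S c (w i) j k = 0"
  proof (cases "N \<le> i")
    case True
    then show ?thesis using assms by (intro TT_zero) (auto simp: bd3_def)
  next
    case False
    then have "2 * N \<le> j \<or> 2 * N \<le> k" using h by auto
    then show ?thesis using TT_bd2[OF assms(1) bd3_slice[OF assms(2)], of c i] by (auto simp: bd2_def)
  qed
qed

lemma TT_T:
  assumes "lin S T"
  shows "T (TT S c V i j) = TT S c (\<lambda>p m. T (V p m)) i j"
  unfolding TT_def by (simp add: lin_sum[OF assms] lin_sc[OF assms])

lemma lin_sum_fun:
  assumes "module S" "\<And>p. p \<in> A \<Longrightarrow> lin S (T p)"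
  shows "lin S (\<lambda>a. \<Sum>p\<in>A. T p a)"
proof -
  interpret m: module S by (rule assms(1))
  show ?thesis unfolding lin_def
  proof (intro conjI allI)
    fix x y
    have "(\<Sum>p\<in>A. T p (x + y)) = (\<Sum>p\<in>A. T p x + T p y)"
      by (rule sum.cong[OF refl]) (simp add: lin_add[OF assms(2)])
    then show "(\<Sum>p\<in>A. T p (x + y)) = (\<Sum>p\<in>A. T p x) + (\<Sum>p\<in>A. T p y)"
      by (simp add: sum.distrib)
  next
    fix c x
    have "(\<Sum>p\<in>A. T p (S c x)) = (\<Sum>p\<in>A. S c (T p x))"
      by (rule sum.cong[OF refl]) (simp add: lin_sc[OF assms(2)])
    then show "(\<Sum>p\<in>A. T p (S c x)) = S c (\<Sum>p\<in>A. T p x)"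
      by (simp add: m.scale_sum_right)
  qed
qed

lemma TT_lin:
  assumes "module S" "\<And>p m. lin S (\<lambda>a. V a p m)"
  shows "lin S (\<lambda>a. TT S c (V a) i j)"
  unfolding TT_def
  by (rule lin_sum_fun[OF assms(1)]) (rule lin_comp[OF lin_scale[OF assms(1)] assms(2)])

lemma lin_diff_sc:
  assumes "module S" "lin S T" "lin S U"
  shows "lin S (\<lambda>a. T a - S e (U a))"
proof -
  interpret m: module S by (rule assms(1))
  show ?thesis unfolding lin_def
    using assms(2,3) by (simp add: lin_add lin_sc m.scale_right_distrib m.scale_right_diff_distrib mult.commute)
qed

lemma csub_0: "csubspace S A \<Longrightarrow> 0 \<in> A" by (simp add: csubspace_def)
lemma csub_add: "csubspace S A \<Longrightarrow> x \<in> A \<Longrightarrow> y \<in> A \<Longrightarrow> x + y \<in> A" by (simp add: csubspace_def)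
lemma csub_sc: "csubspace S A \<Longrightarrow> x \<in> A \<Longrightarrow> S c x \<in> A" by (simp add: csubspace_def)
lemma csub_diff: "module S \<Longrightarrow> csubspace S A \<Longrightarrow> x \<in> A \<Longrightarrow> y \<in> A \<Longrightarrow> x - y \<in> A"
  using csub_add[of S A x "S (-1) y"] csub_sc[of S A y "-1"] module.scale_minus_left[of S 1 y]
  by (simp add: module.scale_one)
lemma csub_sum: "csubspace S A \<Longrightarrow> (\<And>i. i \<in> I \<Longrightarrow> h i \<in> A) \<Longrightarrow> sum h I \<in> A"
  by (induction I rule: infinite_finite_induct) (auto intro: csub_add csub_0)

lemma TT_Rg: "csubspace S A \<Longrightarrow> (\<And>p m. V p m \<in> A) \<Longrightarrow> TT S c V i j \<in> A"
  unfolding TT_def by (rule csub_sum, assumption, rule csub_sc, assumption, blast)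

lemma ev_Rg: "csubspace S A \<Longrightarrow> (\<And>n. p n \<in> A) \<Longrightarrow> ev S p x \<in> A"
  unfolding ev_def by (rule csub_sum, assumption, rule csub_sc, assumption, blast)

lemma cbr_TT: "cbr R pf pg f g i a j =
   TT (sc R) (-1) (\<lambda>p m. f (g a m) p) i j - sc R (sgn2 (pf \<and> pg)) (TT (sc R) (-1) (\<lambda>p m. g (f a p) m) i j)"
  unfolding cbr_def TT_def by (rule refl)

definition gam :: "('r::ab_group_add) lcsa \<Rightarrow> nat \<Rightarrow> nat \<Rightarrow> 'r \<Rightarrow> 'r" where
  "gam R k l = (alph R ^^ k) \<circ> (bet R ^^ l)"

lemma funpow_comm: "(\<And>x. A (B x) = B (A x)) \<Longrightarrow> (A ^^ n) (B x) = B ((A ^^ n) x)"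
  by (induction n) auto

lemma funpow_comm2: "(\<And>x. A (B x) = B (A x)) \<Longrightarrow> (A ^^ n) ((B ^^ m) x) = (B ^^ m) ((A ^^ n) x)"
proof (induction m arbitrary: x)
  case 0 then show ?case by simp
next
  case (Suc m)
  have "(A ^^ n) ((B ^^ Suc m) x) = (A ^^ n) ((B ^^ m) (B x))" by (simp add: funpow_swap1)
  also have "\<dots> = (B ^^ m) ((A ^^ n) (B x))" using Suc by simp
  also have "\<dots> = (B ^^ m) (B ((A ^^ n) x))" using funpow_comm[of A B n "x", OF Suc.prems] by simp
  finally show ?case by (simp add: funpow_swap1)
qed

locale bh =
  fixes R :: "('r::ab_group_add) lcsa"
  assumes BH: "BiHom_LCSA R"
begin

abbreviation "S \<equiv> sc R"

lemma m: "module S" using BH unfolding BiHom_LCSA_def by blast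
lemma Rg_sub2: "csubspace S (Rg R False) \<and> csubspace S (Rg R True)"
  using BH unfolding BiHom_LCSA_def by blast
lemma Rg_sub: "csubspace S (Rg R p)"
  using Rg_sub2 by (cases p) auto
lemma linD: "lin S (D R)" using BH unfolding BiHom_LCSA_def by blast
lemma linA: "lin S (alph R)" using BH unfolding BiHom_LCSA_def by blast
lemma linB: "lin S (bet R)" using BH unfolding BiHom_LCSA_def by blast
lemma AB_Rg: "\<forall>p. \<forall>x\<in>Rg R p. alph R x \<in> Rg R p \<and> bet R x \<in> Rg R p"
  using BH unfolding BiHom_LCSA_def by (elim conjE) assumption
lemma A_Rg: "x \<in> Rg R p \<Longrightarrow> alph R x \<in> Rg R p" using AB_Rg by blast
lemma B_Rg: "x \<in> Rg R p \<Longrightarrow> bet R x \<in> Rg R p" using AB_Rg by blast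
lemma AB0: "\<forall>x. alph R (bet R x) = bet R (alph R x)"
  using BH unfolding BiHom_LCSA_def by (elim conjE) assumption
lemma AB: "alph R (bet R x) = bet R (alph R x)" using AB0 by (rule spec)
lemma brfacts: "(\<forall>a b. fin_supp (br R a b)) \<and> (\<forall>b n. lin S (\<lambda>a. br R a b n)) \<and> (\<forall>a n. lin S (\<lambda>b. br R a b n)) \<and>
    (\<forall>p q a b n. a \<in> Rg R p \<longrightarrow> b \<in> Rg R q \<longrightarrow> br R a b n \<in> Rg R (p \<noteq> q))"
  using BH unfolding BiHom_LCSA_def by (elim conjE) (intro conjI; assumption)
lemma br_fin: "fin_supp (br R a b)" using brfacts by blast
lemma br_lin1: "lin S (\<lambda>a. br R a b n)" using brfacts by blast
lemma br_lin2: "lin S (\<lambda>b. br R a b n)" using brfacts by blast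
lemma br_Rg: "a \<in> Rg R p \<Longrightarrow> b \<in> Rg R q \<Longrightarrow> br R a b n \<in> Rg R (p \<noteq> q)"
  using brfacts by blast

lemma br_zero1: "br R 0 b n = 0" using lin_zero[OF br_lin1] by simp
lemma br_zero2: "br R a 0 n = 0" using lin_zero[OF br_lin2] by simp

lemma lin_gam: "lin S (gam R k l)"
  unfolding gam_def comp_def by (rule lin_comp[OF lin_funpow[OF linA] lin_funpow[OF linB]])

lemma gam_Rg: "x \<in> Rg R p \<Longrightarrow> gam R k l x \<in> Rg R p"
proof -
  have a: "(alph R ^^ n) y \<in> Rg R p" if "y \<in> Rg R p" for n y
    using that by (induction n) (auto intro: A_Rg)
  have b: "(bet R ^^ n) y \<in> Rg R p" if "y \<in> Rg R p" for n y
    using that by (induction n) (auto intro: B_Rg)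
  assume "x \<in> Rg R p" then show ?thesis unfolding gam_def comp_def by (intro a b)
qed

lemma gam_gam: "gam R k l (gam R k' l' x) = gam R (k + k') (l + l') x"
proof -
  have "(bet R ^^ l) ((alph R ^^ k') y) = (alph R ^^ k') ((bet R ^^ l) y)" for y
    using funpow_comm2[of "alph R" "bet R" k' l y] AB by simp
  then show ?thesis unfolding gam_def comp_def by (simp add: funpow_add)
qed

context
  fixes pf :: bool and f :: "'r \<Rightarrow> nat \<Rightarrow> 'r"
  assumes CL: "conf_lin R pf f"
begin
lemma f_fin: "fin_supp (f a)" using CL unfolding conf_lin_def by blast
lemma f_lin: "lin S (\<lambda>a. f a n)" using CL unfolding conf_lin_def by blast
lemma f_D: "f (D R a) n = D R (f a n) + (if n = 0 then 0 else f a (n - 1))"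
  using CL unfolding conf_lin_def by blast
lemma f_Rg: "a \<in> Rg R p \<Longrightarrow> f a n \<in> Rg R (p \<noteq> pf)"
  using CL unfolding conf_lin_def by blast
lemma f_zero: "f 0 n = 0" using lin_zero[OF f_lin] by simp

lemma Fx_lin: "lin S (\<lambda>v. ev S (f v) x)"
  by (rule lin_ev[OF m f_fin f_lin])

lemma Fx_Rg: "a \<in> Rg R p \<Longrightarrow> ev S (f a) x \<in> Rg R (p \<noteq> pf)"
  by (rule ev_Rg[OF Rg_sub]) (rule f_Rg)

lemma fin_supp_shift_D: "fin_supp (\<lambda>n. D R (f v n))"
  by (rule fin_supp_T[of "D R" "f v"]) (rule lin_zero[OF linD], rule f_fin)

lemma fin_supp_shift: "fin_supp (\<lambda>n. if n = 0 then 0 else f v (n - 1))"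
proof -
  obtain N where "bd1 N (f v)" using f_fin fin_supp_bd1 by blast
  then have "bd1 (Suc N) (\<lambda>n. if n = 0 then 0 else f v (n - 1))" by (auto simp: bd1_def)
  then show ?thesis by (rule bd1_fin_supp)
qed

lemma Fx_D: "ev S (f (D R v)) x = D R (ev S (f v) x) + S x (ev S (f v) x)"
proof -
  have "f (D R v) = (\<lambda>n. D R (f v n) + (if n = 0 then 0 else f v (n - 1)))"
    by (simp add: fun_eq_iff f_D)
  then have "ev S (f (D R v)) x = ev S (\<lambda>n. D R (f v n) + (if n = 0 then 0 else f v (n - 1))) x"
    by simp
  also have "\<dots> = ev S (\<lambda>n. D R (f v n)) x + ev S (\<lambda>n. if n = 0 then 0 else f v (n - 1)) x"
    by (rule ev_add[OF m fin_supp_shift_D fin_supp_shift])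
  also have "\<dots> = D R (ev S (f v) x) + S x (ev S (f v) x)"
    using ev_lin[OF m linD f_fin] ev_shift[OF m f_fin] by simp
  finally show ?thesis .
qed

lemma f_bd: "bd1 N u \<Longrightarrow> \<exists>M. bd2 M (\<lambda>m p. f (u m) p)"
  by (rule B1[of f, OF f_zero f_fin])
end

end

context bh begin

lemma hder_CL: "hder R k l pf f \<Longrightarrow> conf_lin R pf f" by (simp add: hder_def)

lemma hder_br: "hder R k l pf f \<Longrightarrow> a \<in> Rg R p \<Longrightarrow> b \<in> Rg R q \<Longrightarrow>
   f (br R a b j) i = shift2 S (\<lambda>n m. br R (f a n) (gam R k l b) m) i j
         + S (sgn2 (p \<and> pf)) (br R (gam R k l a) (f b i) j)"
  unfolding hder_def gam_def by blast

lemma hder_A: "hder R k l pf f \<Longrightarrow> f (alph R a) n = alph R (f a n)" unfolding hder_def by blast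
lemma hder_B: "hder R k l pf f \<Longrightarrow> f (bet R a) n = bet R (f a n)" unfolding hder_def by blast

lemma hder_gam: "hder R k l pf f \<Longrightarrow> f (gam R k' l' a) n = gam R k' l' (f a n)"
proof -
  assume H: "hder R k l pf f"
  have a: "f ((alph R ^^ i) v) n = (alph R ^^ i) (f v n)" for i v
    by (induction i arbitrary: n) (auto simp: hder_A[OF H])
  have b: "f ((bet R ^^ i) v) n = (bet R ^^ i) (f v n)" for i v
    by (induction i arbitrary: n) (auto simp: hder_B[OF H])
  show ?thesis unfolding gam_def comp_def by (simp add: a b)
qed

lemma Fx_gam: "hder R k l pf f \<Longrightarrow> ev S (f (gam R k' l' v)) x = gam R k' l' (ev S (f v) x)"
proof -
  assume H: "hder R k l pf f"
  have "gam R k' l' (ev S (f v) x) = ev S (\<lambda>n. gam R k' l' (f v n)) x"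
    by (rule ev_lin[OF m lin_gam f_fin[OF hder_CL[OF H]]])
  also have "(\<lambda>n. gam R k' l' (f v n)) = f (gam R k' l' v)"
    by (simp add: fun_eq_iff hder_gam[OF H])
  finally show ?thesis by simp
qed

lemma Bw_lin1: "lin S (\<lambda>v. ev S (br R v b) w)"
  by (rule lin_ev[OF m br_fin br_lin1])
lemma Bw_lin2: "lin S (\<lambda>v. ev S (br R a v) w)"
  by (rule lin_ev[OF m br_fin br_lin2])

lemma br_bd1: "bd1 N u \<Longrightarrow> \<exists>M. bd2 M (\<lambda>m j. br R (u m) b j)"
  by (rule B1[of "\<lambda>v j. br R v b j", OF br_zero1 br_fin])
lemma br_bd2: "bd1 N u \<Longrightarrow> \<exists>M. bd2 M (\<lambda>m j. br R a (u m) j)"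
  by (rule B1[of "\<lambda>v j. br R a v j", OF br_zero2 br_fin])

lemma Der:
  assumes H: "hder R k l pf f" and a: "a \<in> Rg R p" and b: "b \<in> Rg R q"
  shows "ev S (f (ev S (br R a b) z)) x
     = ev S (br R (ev S (f a) x) (gam R k l b)) (x + z)
       + S (sgn2 (p \<and> pf)) (ev S (br R (gam R k l a) (ev S (f b) x)) z)"
proof -
  interpret mm: module S by (rule m)
  have CL: "conf_lin R pf f" by (rule hder_CL[OF H])
  define e where "e = sgn2 (p \<and> pf)"
  define w where "w = (\<lambda>n m. br R (f a n) (gam R k l b) m)"
  define w2 where "w2 = (\<lambda>i j. br R (gam R k l a) (f b i) j)"
  obtain Na where Na: "bd1 Na (f a)" using f_fin[OF CL] fin_supp_bd1 by blast
  obtain Nb where Nb: "bd1 Nb (f b)" using f_fin[OF CL] fin_supp_bd1 by blast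
  obtain N1 where N1: "bd2 N1 w" using br_bd1[OF Na] unfolding w_def by blast
  obtain N2 where N2: "bd2 N2 w2" using br_bd2[OF Nb] unfolding w2_def by blast
  have N1': "bd2 (2 * N1) (TT S 1 w)" by (rule TT_bd2[OF m N1])
  have N2': "bd2 N2 (\<lambda>i j. S e (w2 i j))" by (rule bd2_T[OF _ N2]) simp
  have s1: "f (ev S (br R a b) z) = (\<lambda>i. ev S (\<lambda>j. f (br R a b j) i) z)"
    using ev_lin[OF m f_lin[OF CL] br_fin] by (simp add: fun_eq_iff)
  have s2: "(\<lambda>i. ev S (\<lambda>j. f (br R a b j) i) z) = (\<lambda>i. ev S (\<lambda>j. TT S 1 w i j + S e (w2 i j)) z)"
    using hder_br[OF H a b] by (simp add: fun_eq_iff shift2_TT w_def w2_def e_def)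
  have s3: "ev S (\<lambda>i. ev S (\<lambda>j. TT S 1 w i j + S e (w2 i j)) z) x
      = ev S (\<lambda>i. ev S (TT S 1 w i) z) x + S e (ev S (\<lambda>i. ev S (w2 i) z) x)"
    using ev2_add[OF m N1' N2'] ev2_sc[OF m N2] by simp
  have s4: "ev S (\<lambda>i. ev S (TT S 1 w i) z) x = ev S (br R (ev S (f a) x) (gam R k l b)) (x + z)"
  proof -
    have "ev S (\<lambda>i. ev S (TT S 1 w i) z) x = ev S (\<lambda>p. ev S (w p) (z + 1 * x)) x"
      by (rule G'[OF m N1])
    also have "\<dots> = ev S (\<lambda>p. ev S (br R (f a p) (gam R k l b)) (x + z)) x"
      unfolding w_def by (simp add: add.commute)
    also have "\<dots> = ev S (br R (ev S (f a) x) (gam R k l b)) (x + z)"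
      by (rule ev_lin[OF m Bw_lin1 f_fin[OF CL], symmetric])
    finally show ?thesis .
  qed
  have s5: "ev S (\<lambda>i. ev S (w2 i) z) x = ev S (br R (gam R k l a) (ev S (f b) x)) z"
    unfolding w2_def
    by (rule ev_lin[OF m Bw_lin2 f_fin[OF CL], symmetric])
  show ?thesis unfolding e_def[symmetric] s1 s2 s3 s4 s5 ..
qed

lemma cbr_bd:
  assumes "conf_lin R pf f" "conf_lin R pg g"
  shows "\<exists>N. bd2 N (\<lambda>i j. cbr R pf pg f g i a j)"
proof -
  obtain Ng where Ng: "bd1 Ng (g a)" using f_fin[OF assms(2)] fin_supp_bd1 by blast
  obtain Nf where Nf: "bd1 Nf (f a)" using f_fin[OF assms(1)] fin_supp_bd1 by blast
  obtain M1 where M1: "bd2 M1 (\<lambda>m p. f (g a m) p)" using f_bd[OF assms(1) Ng] by blast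
  obtain M2 where M2: "bd2 M2 (\<lambda>p m. g (f a p) m)" using f_bd[OF assms(2) Nf] by blast
  have T1: "bd2 (2 * M1) (TT S (-1) (\<lambda>p m. f (g a m) p))" by (rule TT_bd2[OF m bd2_swap[OF M1]])
  have T2: "bd2 (2 * M2) (\<lambda>i j. S (sgn2 (pf \<and> pg)) (TT S (-1) (\<lambda>p m. g (f a p) m) i j))"
    by (rule bd2_T[OF _ TT_bd2[OF m M2]]) (simp add: module.scale_zero_right[OF m])
  show ?thesis unfolding cbr_TT using bd2_diff[OF T1 T2] by blast
qed

lemma Heval:
  assumes "conf_lin R pf f" "conf_lin R pg g"
  shows "ev S (\<lambda>i. ev S (\<lambda>j. cbr R pf pg f g i a j) y) x
     = ev S (f (ev S (g a) (y - x))) x - S (sgn2 (pf \<and> pg)) (ev S (g (ev S (f a) x)) (y - x))"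
proof -
  define e where "e = sgn2 (pf \<and> pg)"
  obtain Ng where Ng: "bd1 Ng (g a)" using f_fin[OF assms(2)] fin_supp_bd1 by blast
  obtain Nf where Nf: "bd1 Nf (f a)" using f_fin[OF assms(1)] fin_supp_bd1 by blast
  obtain M1 where M1: "bd2 M1 (\<lambda>m p. f (g a m) p)" using f_bd[OF assms(1) Ng] by blast
  obtain M2 where M2: "bd2 M2 (\<lambda>p m. g (f a p) m)" using f_bd[OF assms(2) Nf] by blast
  have M1': "bd2 M1 (\<lambda>p m. f (g a m) p)" using bd2_swap[OF M1] .
  have T1: "bd2 (2 * M1) (TT S (-1) (\<lambda>p m. f (g a m) p))" by (rule TT_bd2[OF m M1'])
  have T2: "bd2 (2 * M2) (TT S (-1) (\<lambda>p m. g (f a p) m))" by (rule TT_bd2[OF m M2])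
  have T2': "bd2 (2 * M2) (\<lambda>i j. S e (TT S (-1) (\<lambda>p m. g (f a p) m) i j))"
    by (rule bd2_T[OF _ T2]) (simp add: module.scale_zero_right[OF m])
  have "ev S (\<lambda>i. ev S (\<lambda>j. cbr R pf pg f g i a j) y) x
     = ev S (\<lambda>i. ev S (TT S (-1) (\<lambda>p m. f (g a m) p) i) y) x
       - S e (ev S (\<lambda>i. ev S (TT S (-1) (\<lambda>p m. g (f a p) m) i) y) x)"
    unfolding cbr_TT e_def[symmetric] ev2_diff[OF m T1 T2'] ev2_sc[OF m T2] ..
  also have "ev S (\<lambda>i. ev S (TT S (-1) (\<lambda>p m. f (g a m) p) i) y) x
      = ev S (\<lambda>p. ev S (\<lambda>m. f (g a m) p) (y - x)) x"
    using G'[OF m M1', of "-1" y x] by simp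
  also have "(\<lambda>p. ev S (\<lambda>m. f (g a m) p) (y - x)) = f (ev S (g a) (y - x))"
    using ev_lin[OF m f_lin[OF assms(1)] f_fin[OF assms(2)]] by (simp add: fun_eq_iff)
  also have "ev S (\<lambda>i. ev S (TT S (-1) (\<lambda>p m. g (f a p) m) i) y) x
      = ev S (\<lambda>p. ev S (g (f a p)) (y - x)) x"
    using G'[OF m M2, of "-1" y x] by simp
  also have "\<dots> = ev S (g (ev S (f a) x)) (y - x)"
    by (rule ev_lin[OF m Fx_lin[OF assms(2)] f_fin[OF assms(1)], symmetric])
  finally show ?thesis unfolding e_def .
qed

end

context bh begin

context
  fixes k l k2 l2 :: nat and pf pg :: bool and f g :: "'r \<Rightarrow> nat \<Rightarrow> 'r"
  assumes Hf: "hder R k l pf f" and Hg: "hder R k2 l2 pg g"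
begin

lemma CLf: "conf_lin R pf f" by (rule hder_CL[OF Hf])
lemma CLg: "conf_lin R pg g" by (rule hder_CL[OF Hg])

lemma key:
  fixes x y z :: complex
  assumes b: "b \<in> Rg R p" and c: "c \<in> Rg R q"
  defines "F \<equiv> \<lambda>v. ev S (f v) x" and "G \<equiv> \<lambda>v. ev S (g v) (y - x)"
      and "B \<equiv> \<lambda>w a b. ev S (br R a b) w"
      and "\<gamma> \<equiv> gam R (k + k2) (l + l2)"
  shows "F (G (B z b c)) - S (sgn2 (pf \<and> pg)) (G (F (B z b c)))
     = B (y + z) (F (G b) - S (sgn2 (pf \<and> pg)) (G (F b))) (\<gamma> c)
       + S (sgn2 (p \<and> (pf \<noteq> pg))) (B z (\<gamma> b) (F (G c) - S (sgn2 (pf \<and> pg)) (G (F c))))"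
proof -
  interpret mm: module S by (rule m)
  define u where "u = y - x"
  define gf where "gf = gam R k l"
  define gg where "gg = gam R k2 l2"
  have linF: "lin S F" unfolding F_def by (rule Fx_lin[OF CLf])
  have linG: "lin S G" unfolding G_def by (rule Fx_lin[OF CLg])
  have linB1: "lin S (\<lambda>v. B w v d)" for w d unfolding B_def by (rule Bw_lin1)
  have linB2: "lin S (\<lambda>v. B w d v)" for w d unfolding B_def by (rule Bw_lin2)
  have Fg: "F (gg v) = gg (F v)" for v unfolding F_def gg_def by (rule Fx_gam[OF Hf])
  have Gf: "G (gf v) = gf (G v)" for v unfolding G_def gf_def by (rule Fx_gam[OF Hg])
  have gfg: "gf (gg v) = \<gamma> v" for v unfolding gf_def gg_def \<gamma>_def by (rule gam_gam)
  have ggf: "gg (gf v) = \<gamma> v" for v unfolding gf_def gg_def \<gamma>_def by (simp add: gam_gam add.commute)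
  have FR: "v \<in> Rg R r \<Longrightarrow> F v \<in> Rg R (r \<noteq> pf)" for v r unfolding F_def by (rule Fx_Rg[OF CLf])
  have GR: "v \<in> Rg R r \<Longrightarrow> G v \<in> Rg R (r \<noteq> pg)" for v r unfolding G_def by (rule Fx_Rg[OF CLg])
  have DerF: "a \<in> Rg R r \<Longrightarrow> d \<in> Rg R r' \<Longrightarrow>
      F (B w a d) = B (x + w) (F a) (gf d) + S (sgn2 (r \<and> pf)) (B w (gf a) (F d))" for a d r r' w
    unfolding F_def B_def gf_def by (rule Der[OF Hf])
  have DerG: "a \<in> Rg R r \<Longrightarrow> d \<in> Rg R r' \<Longrightarrow>
      G (B w a d) = B (u + w) (G a) (gg d) + S (sgn2 (r \<and> pg)) (B w (gg a) (G d))" for a d r r' w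
    unfolding G_def B_def gg_def u_def by (rule Der[OF Hg])
  have ggc: "gg c \<in> Rg R q" unfolding gg_def by (rule gam_Rg[OF c])
  have ggb: "gg b \<in> Rg R p" unfolding gg_def by (rule gam_Rg[OF b])
  have gfc: "gf c \<in> Rg R q" unfolding gf_def by (rule gam_Rg[OF c])
  have gfb: "gf b \<in> Rg R p" unfolding gf_def by (rule gam_Rg[OF b])
  have e1: "x + (u + z) = y + z" "u + (x + z) = y + z" unfolding u_def by simp_all
  define A1 where "A1 = B (y + z) (F (G b)) (\<gamma> c)"
  define A2 where "A2 = B (u + z) (gf (G b)) (gg (F c))"
  define A3 where "A3 = B (x + z) (gg (F b)) (gf (G c))"
  define A4 where "A4 = B z (\<gamma> b) (F (G c))"
  define A5 where "A5 = B (y + z) (G (F b)) (\<gamma> c)"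
  define A6 where "A6 = B z (\<gamma> b) (G (F c))"
  have T1: "F (G (B z b c)) = A1 + S (sgn2 ((p \<noteq> pg) \<and> pf)) A2
      + S (sgn2 (p \<and> pg)) (A3 + S (sgn2 (p \<and> pf)) A4)"
  proof -
    have "F (G (B z b c)) = F (B (u + z) (G b) (gg c) + S (sgn2 (p \<and> pg)) (B z (gg b) (G c)))"
      using DerG[OF b c] by simp
    also have "\<dots> = F (B (u + z) (G b) (gg c)) + S (sgn2 (p \<and> pg)) (F (B z (gg b) (G c)))"
      by (simp add: lin_add[OF linF] lin_sc[OF linF])
    also have "F (B (u + z) (G b) (gg c)) = A1 + S (sgn2 ((p \<noteq> pg) \<and> pf)) A2"
      unfolding DerF[OF GR[OF b] ggc] A1_def A2_def e1 gfg Fg ..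
    also have "F (B z (gg b) (G c)) = A3 + S (sgn2 (p \<and> pf)) A4"
      unfolding DerF[OF ggb GR[OF c]] A3_def A4_def gfg Fg ..
    finally show ?thesis .
  qed
  have T2: "G (F (B z b c)) = A5 + S (sgn2 ((p \<noteq> pf) \<and> pg)) A3
      + S (sgn2 (p \<and> pf)) (A2 + S (sgn2 (p \<and> pg)) A6)"
  proof -
    have "G (F (B z b c)) = G (B (x + z) (F b) (gf c) + S (sgn2 (p \<and> pf)) (B z (gf b) (F c)))"
      using DerF[OF b c] by simp
    also have "\<dots> = G (B (x + z) (F b) (gf c)) + S (sgn2 (p \<and> pf)) (G (B z (gf b) (F c)))"
      by (simp add: lin_add[OF linG] lin_sc[OF linG])
    also have "G (B (x + z) (F b) (gf c)) = A5 + S (sgn2 ((p \<noteq> pf) \<and> pg)) A3"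
      unfolding DerG[OF FR[OF b] gfc] A5_def A3_def e1 ggf Gf ..
    also have "G (B z (gf b) (F c)) = A2 + S (sgn2 (p \<and> pg)) A6"
      unfolding DerG[OF gfb FR[OF c]] A2_def A6_def ggf Gf ..
    finally show ?thesis .
  qed
  have T3: "B (y + z) (F (G b) - S (sgn2 (pf \<and> pg)) (G (F b))) (\<gamma> c) = A1 - S (sgn2 (pf \<and> pg)) A5"
    unfolding A1_def A5_def by (simp add: lin_diff[OF linB1] lin_sc[OF linB1])
  have T4: "B z (\<gamma> b) (F (G c) - S (sgn2 (pf \<and> pg)) (G (F c))) = A4 - S (sgn2 (pf \<and> pg)) A6"
    unfolding A4_def A6_def by (simp add: lin_diff[OF linB2] lin_sc[OF linB2])
  show ?thesis unfolding T1 T2 T3 T4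
    by (cases p; cases pf; cases pg) (simp_all add: sgn2_def algebra_simps)
qed

end
end

context bh begin

context
  fixes k l k2 l2 :: nat and pf pg :: bool and f g :: "'r \<Rightarrow> nat \<Rightarrow> 'r"
  assumes Hf: "hder R k l pf f" and Hg: "hder R k2 l2 pg g"
begin

lemma CLf': "conf_lin R pf f" by (rule hder_CL[OF Hf])
lemma CLg': "conf_lin R pg g" by (rule hder_CL[OF Hg])

lemma h_bd: "\<exists>N. bd2 N (\<lambda>i j. cbr R pf pg f g i a j)"
  by (rule cbr_bd[OF CLf' CLg'])

lemma h_fin: "fin_supp (\<lambda>j. cbr R pf pg f g i a j)"
  using h_bd[of a] bd2_row_supp by blast

lemma h_lin: "lin S (\<lambda>a. cbr R pf pg f g i a j)"
  unfolding cbr_TT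
  by (rule lin_diff_sc[OF m TT_lin[OF m] TT_lin[OF m]])
     (rule lin_comp[OF f_lin[OF CLf'] f_lin[OF CLg']], rule lin_comp[OF f_lin[OF CLg'] f_lin[OF CLf']])

lemma h_zero: "cbr R pf pg f g i 0 j = 0"
  using lin_zero[OF h_lin] by simp

lemma h_Rg:
  assumes a: "a \<in> Rg R q"
  shows "cbr R pf pg f g i a j \<in> Rg R (q \<noteq> (pf \<noteq> pg))"
proof -
  have e1: "((q \<noteq> pg) \<noteq> pf) = (q \<noteq> (pf \<noteq> pg))" by auto
  have e2: "((q \<noteq> pf) \<noteq> pg) = (q \<noteq> (pf \<noteq> pg))" by auto
  have v1: "f (g a m) p \<in> Rg R (q \<noteq> (pf \<noteq> pg))" for p m
    using f_Rg[OF CLf' f_Rg[OF CLg' a]] e1 by simp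
  have v2: "g (f a p) m \<in> Rg R (q \<noteq> (pf \<noteq> pg))" for p m
    using f_Rg[OF CLg' f_Rg[OF CLf' a]] e2 by simp
  show ?thesis unfolding cbr_TT
    by (rule csub_diff[OF m Rg_sub TT_Rg[OF Rg_sub v1] csub_sc[OF Rg_sub TT_Rg[OF Rg_sub v2]]])
qed

lemma h_A: "cbr R pf pg f g i (alph R a) j = alph R (cbr R pf pg f g i a j)"
proof -
  have gA: "g (alph R v) = (\<lambda>n. alph R (g v n))" for v by (simp add: fun_eq_iff hder_A[OF Hg])
  show ?thesis unfolding cbr_TT
    by (simp add: lin_diff[OF linA] lin_sc[OF linA] TT_T[OF linA] hder_A[OF Hf] gA)
qed

lemma h_B: "cbr R pf pg f g i (bet R a) j = bet R (cbr R pf pg f g i a j)"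
proof -
  have gA: "g (bet R v) = (\<lambda>n. bet R (g v n))" for v by (simp add: fun_eq_iff hder_B[OF Hg])
  show ?thesis unfolding cbr_TT
    by (simp add: lin_diff[OF linB] lin_sc[OF linB] TT_T[OF linB] hder_B[OF Hf] gA)
qed

lemma h_D: "cbr R pf pg f g i (D R a) j = D R (cbr R pf pg f g i a j) + (if j = 0 then 0 else cbr R pf pg f g i a (j - 1))"
proof -
  interpret mm: module S by (rule m)
  obtain N1 where N1: "bd2 N1 (\<lambda>i j. cbr R pf pg f g i (D R a) j)" using h_bd by blast
  obtain N2 where N2: "bd2 N2 (\<lambda>i j. cbr R pf pg f g i a j)" using h_bd by blast
  define W1 where "W1 = (\<lambda>i j. D R (cbr R pf pg f g i a j))"
  define W2 where "W2 = (\<lambda>i j. if j = 0 then 0 else cbr R pf pg f g i a (j - 1))"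
  have B1': "bd2 N2 W1" unfolding W1_def by (rule bd2_T[of "D R", OF lin_zero[OF linD] N2])
  have B2': "bd2 (Suc N2) W2" using N2 unfolding W2_def bd2_def by auto
  have B12: "bd2 (max N2 (Suc N2)) (\<lambda>i j. W1 i j + W2 i j)" by (rule bd2_add[OF B1' B2'])
  have BW: "bd2 (max N1 (max N2 (Suc N2))) (\<lambda>i j. cbr R pf pg f g i (D R a) j - (W1 i j + W2 i j))"
    by (rule bd2_diff[OF N1 B12])
  have ev0: "ev S (\<lambda>i. ev S (\<lambda>j. cbr R pf pg f g i (D R a) j - (W1 i j + W2 i j)) y) x = 0" for x y
  proof -
    define Hv where "Hv v = ev S (\<lambda>i. ev S (\<lambda>j. cbr R pf pg f g i v j) y) x" for v
    define F where "F v = ev S (f v) x" for v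
    define G where "G v = ev S (g v) (y - x)" for v
    define e where "e = sgn2 (pf \<and> pg)"
    have HH: "Hv v = F (G v) - S e (G (F v))" for v
      unfolding Hv_def F_def G_def e_def by (rule Heval[OF CLf' CLg'])
    have s1: "ev S (\<lambda>i. ev S (\<lambda>j. cbr R pf pg f g i (D R a) j - (W1 i j + W2 i j)) y) x
        = Hv (D R a) - (ev S (\<lambda>i. ev S (W1 i) y) x + ev S (\<lambda>i. ev S (W2 i) y) x)"
      unfolding Hv_def using ev2_diff[OF m N1 B12] ev2_add[OF m B1' B2'] by simp
    have s2: "ev S (\<lambda>i. ev S (W1 i) y) x = D R (Hv a)"
    proof -
      have "ev S (W1 i) y = D R (ev S (\<lambda>j. cbr R pf pg f g i a j) y)" for i
        unfolding W1_def by (rule ev_lin[OF m linD h_fin, symmetric])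
      then have "ev S (\<lambda>i. ev S (W1 i) y) x = ev S (\<lambda>i. D R (ev S (\<lambda>j. cbr R pf pg f g i a j) y)) x"
        by simp
      also have "\<dots> = D R (Hv a)" unfolding Hv_def
        by (rule ev_lin[OF m linD bd2_col_supp[OF N2], symmetric])
      finally show ?thesis .
    qed
    have s3: "ev S (\<lambda>i. ev S (W2 i) y) x = S y (Hv a)"
    proof -
      have "ev S (W2 i) y = S y (ev S (\<lambda>j. cbr R pf pg f g i a j) y)" for i
        unfolding W2_def by (rule ev_shift[OF m h_fin])
      then have "ev S (\<lambda>i. ev S (W2 i) y) x = ev S (\<lambda>i. S y (ev S (\<lambda>j. cbr R pf pg f g i a j) y)) x"
        by simp
      also have "\<dots> = S y (Hv a)" unfolding Hv_def
        by (rule ev_sc[OF m bd2_col_supp[OF N2]])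
      finally show ?thesis .
    qed
    have linF: "lin S F" unfolding F_def by (rule Fx_lin[OF CLf'])
    have linG: "lin S G" unfolding G_def by (rule Fx_lin[OF CLg'])
    have FD: "F (D R v) = D R (F v) + S x (F v)" for v unfolding F_def by (rule Fx_D[OF CLf'])
    have GD: "G (D R v) = D R (G v) + S y (G v) - S x (G v)" for v
      unfolding G_def using Fx_D[OF CLg', of v "y - x"] by (simp add: mm.scale_left_diff_distrib)
    have "Hv (D R a) = D R (Hv a) + S y (Hv a)"
      unfolding HH GD FD
      by (simp add: lin_add[OF linF] lin_diff[OF linF] lin_sc[OF linF] lin_add[OF linG] lin_sc[OF linG]
          lin_diff[OF linD] lin_sc[OF linD] FD GD algebra_simps)
    then show ?thesis unfolding s1 s2 s3 by simp
  qed
  have "cbr R pf pg f g i (D R a) j - (W1 i j + W2 i j) = 0"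
    by (rule U2[OF m BW ev0])
  then show ?thesis unfolding W1_def W2_def by simp
qed

lemma h_der:
  assumes b: "b \<in> Rg R p" and c: "c \<in> Rg R q"
  shows "cbr R pf pg f g n (br R b c j') i'
     = shift2 S (\<lambda>n' m. br R (cbr R pf pg f g n b n') (gam R (k + k2) (l + l2) c) m) i' j'
       + S (sgn2 (p \<and> (pf \<noteq> pg))) (br R (gam R (k + k2) (l + l2) b) (cbr R pf pg f g n c i') j')"
proof -
  interpret mm: module S by (rule m)
  define \<gamma> where "\<gamma> = gam R (k + k2) (l + l2)"
  define e where "e = sgn2 (p \<and> (pf \<noteq> pg))"
  define W1 where "W1 = (\<lambda>i i' j'. cbr R pf pg f g i (br R b c j') i')"
  define w where "w = (\<lambda>i n' m. br R (cbr R pf pg f g i b n') (\<gamma> c) m)"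
  define W2 where "W2 = (\<lambda>i. TT S 1 (w i))"
  define W3 where "W3 = (\<lambda>i i' j'. S e (br R (\<gamma> b) (cbr R pf pg f g i c i') j'))"
  obtain Nb where Nb: "bd1 Nb (br R b c)" using br_fin fin_supp_bd1 by blast
  obtain M1 where M1: "bd3 M1 W1" unfolding W1_def
    using B3[of "\<lambda>v i i'. cbr R pf pg f g i v i'", OF h_zero h_bd Nb] by blast
  obtain Mw0 where Mw0: "bd2 Mw0 (\<lambda>i n'. cbr R pf pg f g i b n')" using h_bd by blast
  obtain Mw where Mw: "bd3 Mw w" unfolding w_def
    using B2[of "\<lambda>v m. br R v (\<gamma> c) m", OF br_zero1 br_fin Mw0] by blast
  have M2: "bd3 (2 * Mw) W2" unfolding W2_def by (rule TT_bd3[OF m Mw])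
  obtain Mc0 where Mc0: "bd2 Mc0 (\<lambda>i i'. cbr R pf pg f g i c i')" using h_bd by blast
  have z3: "S e (br R (\<gamma> b) 0 p) = 0" for p by (simp add: br_zero2)
  have f3: "fin_supp (\<lambda>j'. S e (br R (\<gamma> b) v j'))" for v
    by (rule fin_supp_T[of "S e"]) (simp, rule br_fin)
  obtain M3 where M3: "bd3 M3 W3" unfolding W3_def
    using B2[of "\<lambda>v j'. S e (br R (\<gamma> b) v j')", OF z3 f3 Mc0] by blast
  have M23: "bd3 (max (2 * Mw) M3) (\<lambda>i i' j'. W2 i i' j' + W3 i i' j')" by (rule bd3_add[OF M2 M3])
  have MW: "bd3 (max M1 (max (2 * Mw) M3)) (\<lambda>i i' j'. W1 i i' j' - (W2 i i' j' + W3 i i' j'))"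
    by (rule bd3_diff[OF M1 M23])
  have ev0: "ev S (\<lambda>i. ev S (\<lambda>i'. ev S (\<lambda>j'. W1 i i' j' - (W2 i i' j' + W3 i i' j')) z) y) x = 0" for x y z
  proof -
    define Hv where "Hv v = ev S (\<lambda>i. ev S (\<lambda>j. cbr R pf pg f g i v j) y) x" for v
    have s0: "ev S (\<lambda>i. ev S (\<lambda>i'. ev S (\<lambda>j'. W1 i i' j' - (W2 i i' j' + W3 i i' j')) z) y) x
       = ev S (\<lambda>i. ev S (\<lambda>i'. ev S (W1 i i') z) y) x
         - (ev S (\<lambda>i. ev S (\<lambda>i'. ev S (W2 i i') z) y) x + ev S (\<lambda>i. ev S (\<lambda>i'. ev S (W3 i i') z) y) x)"
      using ev3_diff[OF m M1 M23] ev3_add[OF m M2 M3] by simp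
    have E1: "ev S (\<lambda>i. ev S (\<lambda>i'. ev S (W1 i i') z) y) x = Hv (ev S (br R b c) z)"
    proof -
      have "ev S (W1 i i') z = cbr R pf pg f g i (ev S (br R b c) z) i'" for i i'
        unfolding W1_def by (rule ev_lin[OF m h_lin br_fin, symmetric])
      then show ?thesis unfolding Hv_def by simp
    qed
    have E2: "ev S (\<lambda>i. ev S (\<lambda>i'. ev S (W2 i i') z) y) x = ev S (br R (Hv b) (\<gamma> c)) (y + z)"
    proof -
      have "ev S (\<lambda>i'. ev S (W2 i i') z) y = ev S (br R (ev S (\<lambda>n'. cbr R pf pg f g i b n') y) (\<gamma> c)) (y + z)" for i
      proof -
        have "ev S (\<lambda>i'. ev S (W2 i i') z) y = ev S (\<lambda>p. ev S (w i p) (z + 1 * y)) y"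
          unfolding W2_def by (rule G'[OF m bd3_slice[OF Mw]])
        also have "\<dots> = ev S (\<lambda>p. ev S (br R (cbr R pf pg f g i b p) (\<gamma> c)) (y + z)) y"
          unfolding w_def by (simp add: add.commute)
        also have "\<dots> = ev S (br R (ev S (\<lambda>n'. cbr R pf pg f g i b n') y) (\<gamma> c)) (y + z)"
          by (rule ev_lin[OF m Bw_lin1 h_fin, symmetric])
        finally show ?thesis .
      qed
      then have "ev S (\<lambda>i. ev S (\<lambda>i'. ev S (W2 i i') z) y) x
          = ev S (\<lambda>i. ev S (br R (ev S (\<lambda>n'. cbr R pf pg f g i b n') y) (\<gamma> c)) (y + z)) x" by simp
      also have "\<dots> = ev S (br R (Hv b) (\<gamma> c)) (y + z)" unfolding Hv_def
        by (rule ev_lin[OF m Bw_lin1 bd2_col_supp[OF Mw0], symmetric])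
      finally show ?thesis .
    qed
    have E3: "ev S (\<lambda>i. ev S (\<lambda>i'. ev S (W3 i i') z) y) x = S e (ev S (br R (\<gamma> b) (Hv c)) z)"
    proof -
      have linT: "lin S (\<lambda>v. S e (ev S (br R (\<gamma> b) v) z))"
        by (rule lin_comp[OF lin_scale[OF m] Bw_lin2])
      have "ev S (W3 i i') z = S e (ev S (br R (\<gamma> b) (cbr R pf pg f g i c i')) z)" for i i'
        unfolding W3_def by (rule ev_sc[OF m br_fin])
      then have "ev S (\<lambda>i. ev S (\<lambda>i'. ev S (W3 i i') z) y) x
         = ev S (\<lambda>i. ev S (\<lambda>i'. S e (ev S (br R (\<gamma> b) (cbr R pf pg f g i c i')) z)) y) x" by simp
      also have "\<dots> = ev S (\<lambda>i. S e (ev S (br R (\<gamma> b) (ev S (\<lambda>i'. cbr R pf pg f g i c i') y)) z)) x"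
        using ev_lin[OF m linT h_fin, symmetric] by simp
      also have "\<dots> = S e (ev S (br R (\<gamma> b) (Hv c)) z)" unfolding Hv_def
        by (rule ev_lin[OF m linT bd2_col_supp[OF Mc0], symmetric])
      finally show ?thesis .
    qed
    have HH: "Hv v = ev S (f (ev S (g v) (y - x))) x - S (sgn2 (pf \<and> pg)) (ev S (g (ev S (f v) x)) (y - x))" for v
      unfolding Hv_def by (rule Heval[OF CLf' CLg'])
    have K: "Hv (ev S (br R b c) z) = ev S (br R (Hv b) (\<gamma> c)) (y + z) + S e (ev S (br R (\<gamma> b) (Hv c)) z)"
      unfolding HH e_def \<gamma>_def using key[OF Hf Hg b c, of z y x] by simp
    show ?thesis unfolding s0 E1 E2 E3 K by simp
  qed
  have "W1 n i' j' - (W2 n i' j' + W3 n i' j') = 0" by (rule U3[OF m MW ev0])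
  then show ?thesis unfolding W1_def W2_def W3_def w_def \<gamma>_def e_def shift2_TT by simp
qed

lemma h_hder: "hder R (k + k2) (l + l2) (pf \<noteq> pg) (\<lambda>a j. cbr R pf pg f g n a j)"
  unfolding hder_def conf_lin_def
proof (intro conjI allI impI)
  fix a show "fin_supp (cbr R pf pg f g n a)" using h_fin by simp
next
  fix i show "lin S (\<lambda>a. cbr R pf pg f g n a i)" by (rule h_lin)
next
  fix a i show "cbr R pf pg f g n (D R a) i = D R (cbr R pf pg f g n a i) + (if i = 0 then 0 else cbr R pf pg f g n a (i - 1))"
    by (rule h_D)
next
  fix p a i assume "a \<in> Rg R p"
  then show "cbr R pf pg f g n a i \<in> Rg R (p \<noteq> (pf \<noteq> pg))" by (rule h_Rg)
next
  fix a i show "cbr R pf pg f g n (alph R a) i = alph R (cbr R pf pg f g n a i)" by (rule h_A)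
next
  fix a i show "cbr R pf pg f g n (bet R a) i = bet R (cbr R pf pg f g n a i)" by (rule h_B)
next
  fix p q a b i j assume "a \<in> Rg R p" "b \<in> Rg R q"
  then show "cbr R pf pg f g n (br R a b j) i =
       shift2 S (\<lambda>na. br R (cbr R pf pg f g n a na) (((alph R ^^ (k + k2)) \<circ> (bet R ^^ (l + l2))) b)) i j +
       S (sgn2 (p \<and> (pf \<noteq> pg))) (br R (((alph R ^^ (k + k2)) \<circ> (bet R ^^ (l + l2))) a) (cbr R pf pg f g n b i) j)"
    using h_der[of a p b q n j i] unfolding gam_def by simp
qed

end
end

theorem mainTheorem10:
  fixes R :: "('r::ab_group_add) lcsa"
    and k l s t :: nat
    and pf pg :: bool
    and f g :: "'r \<Rightarrow> nat \<Rightarrow> 'r"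
  assumes "BiHom_LCSA R"
    and "hder R k l pf f"
    and "hder R s t pg g"
  shows "\<forall>n. is_der R (k + s) (l + t) (\<lambda>a j. cbr R pf pg f g n a j)"
proof
  fix n
  interpret bh R by (rule bh.intro[OF assms(1)])
  show "is_der R (k + s) (l + t) (\<lambda>a j. cbr R pf pg f g n a j)"
    unfolding is_der_def using h_hder[OF assms(2) assms(3)] by blast
qed

end
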